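(* Let $\{\ket{j}\}_{j=0}^{7}$ be the computational basis of three qubits, where $\ket{j}=\ket{j_1j_2j_3}$ with $j=4j_1+2j_2+j_3$, and let $$\ket{\psi_2}=\frac{1}{4\sqrt{2}}\left(\ket{0}+\ket{1}+\ket{2}+\ket{3}+\ket{4}+\ket{5}+\ket{6}+5\ket{7}\right),\qquad \rho_2=\ket{\psi_2}\bra{\psi_2}.$$ Denote by $A_2,B_2,C_2$ the first, second and third qubits of $\rho_2$. Then $$D(B_2C_2|A_2)=D(A_2C_2|B_2)=D(A_2B_2|C_2)=D(C_2|A_2B_2)=D(B_2|A_2C_2)=D(A_2|B_2C_2)$$ $$=-\tfrac{1}{8}(4+\sqrt{13})\log\left(\tfrac{1}{8}(4+\sqrt{13})\right)-\tfrac{1}{8}(4-\sqrt{13})\log\left(\tfrac{1}{8}(4-\sqrt{13})\right)\approx 0.28.$$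
   Context: Logarithms are base 2, and $S(\sigma)=-\mathrm{Tr}(\sigma\log\sigma)$ is the von Neumann entropy. For a state $\rho_{XY}$ on a bipartite system $X\otimes Y$ (here $X$ and $Y$ are complementary groups of the three qubits), the quantum discord with measurement on $X$ is $$D(Y|X)=\min_{\{E_a\}}\sum_a p_a S(\rho_{Y|a})+S(\rho_X)-S(\rho_{XY}),$$ where the minimum is over all POVMs $\{E_a\}$ on $X$ ($E_a\ge 0$, $\sum_a E_a=I$), $p_a=\mathrm{Tr}((E_a\otimes I)\rho_{XY})$, $\rho_{Y|a}=\mathrm{Tr}_X((E_a\otimes I)\rho_{XY})/p_a$, and $\rho_X,\rho_Y$ are reduced states. For example $D(B_2C_2|A_2)$ is the discord of $\rho_2$ viewed as a state on $A_2\otimes(B_2C_2)$ with measurement on $A_2$. *)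

theory Defs
  imports "Jordan_Normal_Form.Matrix" "Jordan_Normal_Form.Char_Poly"
          "Jordan_Normal_Form.Schur_Decomposition"
begin

text \<open>Eigenvalues of a square complex matrix, with algebraic multiplicity, are the roots of its
  characteristic polynomial. For a density matrix these are real and nonnegative;
  S(sigma) = - sum over eigenvalues of lambda log2 lambda, with 0 log 0 = 0.\<close>

definition xlogx :: "real \<Rightarrow> real" where
  "xlogx x = (if x = 0 then 0 else x * log 2 x)"

definition vn_entropy :: "complex mat \<Rightarrow> real" where
  "vn_entropy \<sigma> = - sum_mset (image_mset (\<lambda>e. xlogx (Re e)) (proots (char_poly \<sigma>)))"

text \<open>Qubits are numbered 0 (first, A), 1 (second, B), 2 (third, C).\<close>

definition qbit :: "nat \<Rightarrow> nat \<Rightarrow> nat" where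
  "qbit j k = (j div 2 ^ (2 - k)) mod 2"

definition sub_idx :: "nat list \<Rightarrow> nat \<Rightarrow> nat" where
  "sub_idx X j = (\<Sum>t<length X. qbit j (X ! t) * 2 ^ (length X - 1 - t))"

definition compl_qubits :: "nat list \<Rightarrow> nat list" where
  "compl_qubits X = [k \<leftarrow> [0,1,2]. k \<notin> set X]"

text \<open>Partial trace over the qubits in X of an 8x8 matrix; result lives on the complement.\<close>
definition ptrace :: "nat list \<Rightarrow> complex mat \<Rightarrow> complex mat" where
  "ptrace X M = (let Y = compl_qubits X in
     mat (2 ^ length Y) (2 ^ length Y) (\<lambda>(y, y').
       \<Sum>j<8. \<Sum>j'<8. if sub_idx Y j = y \<and> sub_idx Y j' = y' \<and> sub_idx X j = sub_idx X j'
                       then M $$ (j, j') else 0))"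

text \<open>The operator E \<otimes> I on the three qubits, E acting on the qubits X.\<close>
definition embed_op :: "nat list \<Rightarrow> complex mat \<Rightarrow> complex mat" where
  "embed_op X E = (let Y = compl_qubits X in
     mat 8 8 (\<lambda>(j, j'). if sub_idx Y j = sub_idx Y j' then E $$ (sub_idx X j, sub_idx X j') else 0))"

definition psd_mat :: "nat \<Rightarrow> complex mat \<Rightarrow> bool" where
  "psd_mat d E \<longleftrightarrow> E \<in> carrier_mat d d \<and> mat_adjoint E = E \<and>
     (\<forall>v \<in> carrier_vec d. Im (v \<bullet>c (E *\<^sub>v v)) = 0 \<and> 0 \<le> Re (v \<bullet>c (E *\<^sub>v v)))"

definition povm :: "nat \<Rightarrow> complex mat list \<Rightarrow> bool" where
  "povm d Es \<longleftrightarrow> (\<forall>E \<in> set Es. psd_mat d E) \<and>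
     (\<forall>i<d. \<forall>j<d. (\<Sum>a<length Es. Es ! a $$ (i, j)) = (if i = j then 1 else 0))"

definition mtrace :: "complex mat \<Rightarrow> complex" where
  "mtrace M = (\<Sum>i<dim_row M. M $$ (i, i))"

section \<open>Quantum discord D(Y|X) with measurement on the qubits X\<close>

definition meas_prob :: "nat list \<Rightarrow> complex mat \<Rightarrow> complex mat \<Rightarrow> real" where
  "meas_prob X \<rho> E = Re (mtrace (embed_op X E * \<rho>))"

definition post_state :: "nat list \<Rightarrow> complex mat \<Rightarrow> complex mat \<Rightarrow> complex mat" where
  "post_state X \<rho> E = complex_of_real (1 / meas_prob X \<rho> E) \<cdot>\<^sub>m ptrace X (embed_op X E * \<rho>)"

definition discord :: "nat list \<Rightarrow> complex mat \<Rightarrow> real" where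
  "discord X \<rho> =
     (INF Es \<in> {Es. povm (2 ^ length X) Es}.
        \<Sum>a<length Es. meas_prob X \<rho> (Es ! a) * vn_entropy (post_state X \<rho> (Es ! a)))
     + vn_entropy (ptrace (compl_qubits X) \<rho>) - vn_entropy \<rho>"

definition psi2 :: "complex vec" where
  "psi2 = vec 8 (\<lambda>j. (if j = 7 then 5 else 1) / (4 * complex_of_real (sqrt 2)))"

definition rho2 :: "complex mat" where
  "rho2 = mat 8 8 (\<lambda>(i, j). psi2 $ i * cnj (psi2 $ j))"

end

theory Submission
  imports Defs
begin

lemma mtrace_mult_comm:
  fixes A B :: "complex mat"
  assumes "A \<in> carrier_mat n m" "B \<in> carrier_mat m n"
  shows "mtrace (A * B) = mtrace (B * A)"
proof -
  have "mtrace (A * B) = (\<Sum>i<n. \<Sum>k<m. A $$ (i,k) * B $$ (k,i))"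
    using assms by (simp add: mtrace_def scalar_prod_def atLeast0LessThan)
  also have "\<dots> = (\<Sum>k<m. \<Sum>i<n. B $$ (k,i) * A $$ (i,k))"
    by (subst sum.swap) (simp add: mult.commute)
  also have "\<dots> = mtrace (B * A)"
    using assms by (simp add: mtrace_def scalar_prod_def atLeast0LessThan)
  finally show ?thesis .
qed

lemma proots_linear_list:
  "proots (\<Prod>a\<leftarrow>as. [:- a, 1:]) = mset (as :: complex list)"
proof (induction as)
  case Nil then show ?case by simp
next
  case (Cons a as)
  have nz: "(\<Prod>a\<leftarrow>as. [:- a, 1:]) \<noteq> (0 :: complex poly)"
    by (auto simp: prod_list_zero_iff)
  have e: "(\<Prod>a\<leftarrow>a # as. [:- a, 1:]) = [:- a, 1:] * (\<Prod>a\<leftarrow>as. [:- a, 1:])" by simp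
  have "proots (\<Prod>a\<leftarrow>a # as. [:- a, 1:]) = proots [:- a, 1:] + proots (\<Prod>a\<leftarrow>as. [:- a, 1:])"
    unfolding e using nz by (intro proots_mult) auto
  also have "\<dots> = {#a#} + mset as" using Cons proots_linear_factor[of "-a"] by simp
  finally show ?case by simp
qed

lemma eig_list:
  fixes A :: "complex mat"
  assumes A: "A \<in> carrier_mat n n"
  shows "\<exists>es. proots (char_poly A) = mset es \<and> length es = n \<and> sum_list es = mtrace A
           \<and> (\<forall>e\<in>set es. eigenvalue A e)"
proof -
  obtain es where cp: "char_poly A = (\<Prod>a\<leftarrow>es. [:- a, 1:])" and len: "length es = n"
    using char_poly_factorized[OF A] by blast
  obtain B P Q where sch: "schur_decomposition A es = (B,P,Q)"
    by (cases "schur_decomposition A es") auto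
  from schur_decomposition[OF A cp sch]
  have sim: "similar_mat_wit A B P Q" and dg: "diag_mat B = es" by auto
  from sim A have Bc: "B \<in> carrier_mat n n" and Pc: "P \<in> carrier_mat n n" and Qc: "Q \<in> carrier_mat n n"
    and QP: "Q * P = 1\<^sub>m n" and AP: "A = P * B * Q"
    unfolding similar_mat_wit_def Let_def by auto
  have "mtrace A = mtrace (P * (B * Q))" using AP Pc Bc Qc by (simp add: assoc_mult_mat)
  also have "\<dots> = mtrace ((B * Q) * P)" using Pc Bc Qc by (intro mtrace_mult_comm) auto
  also have "\<dots> = mtrace B" using Pc Bc Qc QP by (simp add: assoc_mult_mat)
  also have "\<dots> = sum_list es" using Bc
    unfolding dg[symmetric] mtrace_def diag_mat_def
    by (simp add: sum_list_sum_nth atLeast0LessThan)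
  finally have tr: "sum_list es = mtrace A" ..
  have ev: "\<forall>e\<in>set es. eigenvalue A e"
    unfolding eigenvalue_root_char_poly[OF A] cp
    by (auto simp: poly_prod_list prod_list_zero_iff)
  show ?thesis using cp len tr ev proots_linear_list by auto
qed

lemma smult_vec_cancel:
  fixes v :: "complex vec"
  assumes v: "v \<in> carrier_vec n" and nz: "v \<noteq> 0\<^sub>v n" and eq: "a \<cdot>\<^sub>v v = b \<cdot>\<^sub>v v"
  shows "a = b"
proof -
  have "\<exists>i<n. v $ i \<noteq> 0"
  proof (rule ccontr)
    assume "\<not> (\<exists>i<n. v $ i \<noteq> 0)"
    then have "\<forall>i<n. v $ i = 0" by blast
    then have "v = 0\<^sub>v n" using v by (intro eq_vecI) auto
    with nz show False by simp
  qed
  then obtain i where i: "i < n" and vi: "v $ i \<noteq> 0" by blast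
  have "(a \<cdot>\<^sub>v v) $ i = (b \<cdot>\<^sub>v v) $ i" using eq by simp
  then have "a * v $ i = b * v $ i" using i v by simp
  then show ?thesis using vi by simp
qed

lemma smult_mat_vec:
  fixes B :: "complex mat"
  assumes "B \<in> carrier_mat n n" "v \<in> carrier_vec n"
  shows "(c \<cdot>\<^sub>m B) *\<^sub>v v = c \<cdot>\<^sub>v (B *\<^sub>v v)"
  using assms by (intro eq_vecI) (auto simp: scalar_prod_def sum_distrib_left mult.assoc)

lemma eig_quad:
  fixes A :: "complex mat"
  assumes A: "A \<in> carrier_mat n n" and eq: "A * A + c \<cdot>\<^sub>m 1\<^sub>m n = A" and ev: "eigenvalue A e"
  shows "e * e + c = e"
proof -
  obtain v where v: "v \<in> carrier_vec n" and nz: "v \<noteq> 0\<^sub>v n" and Av: "A *\<^sub>v v = e \<cdot>\<^sub>v v"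
    using ev A unfolding eigenvalue_def eigenvector_def by auto
  have AAv: "(A * A) *\<^sub>v v = (e * e) \<cdot>\<^sub>v v"
    using A v Av by (simp add: mult_mat_vec smult_smult_assoc)
  have "(A * A + c \<cdot>\<^sub>m 1\<^sub>m n) *\<^sub>v v = (e * e + c) \<cdot>\<^sub>v v"
    using A v by (simp add: add_mult_distrib_mat_vec[of _ n n] AAv smult_mat_vec[of "1\<^sub>m n" n v c] add_smult_distrib_vec)
  then have "(e * e + c) \<cdot>\<^sub>v v = e \<cdot>\<^sub>v v" using eq Av by simp
  then show ?thesis using smult_vec_cancel[OF v nz] by blast
qed

lemma eig_cubic:
  fixes A :: "complex mat"
  assumes A: "A \<in> carrier_mat n n" and eq: "A * (A * A) + c \<cdot>\<^sub>m A = A * A" and ev: "eigenvalue A e"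
  shows "e * e * e + c * e = e * e"
proof -
  obtain v where v: "v \<in> carrier_vec n" and nz: "v \<noteq> 0\<^sub>v n" and Av: "A *\<^sub>v v = e \<cdot>\<^sub>v v"
    using ev A unfolding eigenvalue_def eigenvector_def by auto
  have AAv: "(A * A) *\<^sub>v v = (e * e) \<cdot>\<^sub>v v"
    using A v Av by (simp add: mult_mat_vec smult_smult_assoc)
  have "(A * (A * A)) *\<^sub>v v = A *\<^sub>v ((A * A) *\<^sub>v v)"
    by (rule assoc_mult_mat_vec) (use A v in auto)
  also have "\<dots> = (e * e) \<cdot>\<^sub>v (A *\<^sub>v v)" using AAv A v by (simp add: mult_mat_vec)
  also have "\<dots> = (e * e * e) \<cdot>\<^sub>v v" using Av by (simp add: smult_smult_assoc)
  finally have AAAv: "(A * (A * A)) *\<^sub>v v = (e * e * e) \<cdot>\<^sub>v v" .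
  have "(A * (A * A) + c \<cdot>\<^sub>m A) *\<^sub>v v = (e * e * e + c * e) \<cdot>\<^sub>v v"
    using A v by (simp add: add_mult_distrib_mat_vec[of _ n n] AAAv Av smult_mat_vec add_smult_distrib_vec smult_smult_assoc)
  then have "(e * e * e + c * e) \<cdot>\<^sub>v v = (e * e) \<cdot>\<^sub>v v" using eq AAv by simp
  then show ?thesis using smult_vec_cancel[OF v nz] by blast
qed

lemma vn_entropy_list:
  assumes "proots (char_poly A) = mset es"
  shows "vn_entropy A = - sum_list (map (\<lambda>e. xlogx (Re e)) es)"
  unfolding vn_entropy_def assms by (metis mset_map sum_mset_sum_list)

lemma vn_entropy_idem:
  fixes A :: "complex mat"
  assumes A: "A \<in> carrier_mat n n" and idem: "A * A = A"
  shows "vn_entropy A = 0"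
proof -
  obtain es where pr: "proots (char_poly A) = mset es" and ev: "\<forall>e\<in>set es. eigenvalue A e"
    using eig_list[OF A] by blast
  have eq: "A * A + 0 \<cdot>\<^sub>m 1\<^sub>m n = A" using A idem by (intro eq_matI) auto
  have "\<forall>e\<in>set es. xlogx (Re e) = 0"
  proof
    fix e assume "e \<in> set es"
    then have "e * e + 0 = e" using eig_quad[OF A eq] ev by blast
    then have "e = 0 \<or> e = 1"
      by (metis add_0_right mult_cancel_right1 mult_zero_left)
    then show "xlogx (Re e) = 0" by (auto simp: xlogx_def)
  qed
  then have "map (\<lambda>e. xlogx (Re e)) es = map (\<lambda>e. 0) es" by simp
  then show ?thesis unfolding vn_entropy_list[OF pr] by (simp add: sum_list_replicate map_replicate_const)
qed

lemma xlogx_nonpos: "0 \<le> x \<Longrightarrow> x \<le> 1 \<Longrightarrow> xlogx x \<le> 0"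
  unfolding xlogx_def by (auto simp: mult_nonneg_nonpos)

lemma sum_list_nonneg_le:
  fixes es :: "real list"
  assumes "\<forall>e\<in>set es. 0 \<le> e" "x \<in> set es"
  shows "x \<le> sum_list es"
  using assms
proof (induction es)
  case Nil then show ?case by simp
next
  case (Cons a es)
  then show ?case by (auto simp: sum_list_nonneg)
qed

lemma vn_entropy_nonneg:
  fixes A :: "complex mat"
  assumes A: "A \<in> carrier_mat n n"
    and psd: "\<forall>v\<in>carrier_vec n. Im (v \<bullet>c (A *\<^sub>v v)) = 0 \<and> 0 \<le> Re (v \<bullet>c (A *\<^sub>v v))"
    and tr: "mtrace A = 1"
  shows "vn_entropy A \<ge> 0"
proof -
  obtain es where pr: "proots (char_poly A) = mset es" and ev: "\<forall>e\<in>set es. eigenvalue A e"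
    and sl: "sum_list es = mtrace A"
    using eig_list[OF A] by blast
  have real: "Im e = 0 \<and> 0 \<le> Re e" if e: "e \<in> set es" for e
  proof -
    obtain v where v: "v \<in> carrier_vec n" and nz: "v \<noteq> 0\<^sub>v n" and Av: "A *\<^sub>v v = e \<cdot>\<^sub>v v"
      using ev e A unfolding eigenvalue_def eigenvector_def by auto
    have "v \<bullet>c (A *\<^sub>v v) = v \<bullet>c (e \<cdot>\<^sub>v v)" using Av by simp
    also have "\<dots> = cnj e * (v \<bullet>c v)" using v
      by (simp add: scalar_prod_def sum_distrib_left conjugate_complex_def algebra_simps)
    finally have q: "v \<bullet>c (A *\<^sub>v v) = cnj e * (v \<bullet>c v)" .
    have pos: "v \<bullet>c v > 0" using v nz by simp
    then have "Im (v \<bullet>c v) = 0" "Re (v \<bullet>c v) > 0" by (auto simp: less_complex_def)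
    moreover have "Im (cnj e * (v \<bullet>c v)) = 0" "0 \<le> Re (cnj e * (v \<bullet>c v))" using psd v q by auto
    ultimately show ?thesis by (auto simp: zero_le_mult_iff)
  qed
  have sre: "sum_list (map Re es) = 1"
  proof -
    have "Re (sum_list es) = sum_list (map Re es)" by (induction es) auto
    then show ?thesis using sl tr by simp
  qed
  have "\<forall>e\<in>set es. xlogx (Re e) \<le> 0"
  proof
    fix e assume e: "e \<in> set es"
    have "Re e \<le> sum_list (map Re es)"
      by (rule sum_list_nonneg_le) (use real e in auto)
    then show "xlogx (Re e) \<le> 0" using real[OF e] sre by (intro xlogx_nonpos) auto
  qed
  then have "sum_list (map (\<lambda>e. xlogx (Re e)) es) \<le> 0"
    by (induction es) (auto intro: add_nonpos_nonpos)
  then show ?thesis unfolding vn_entropy_list[OF pr] by simp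
qed

locale qsplit =
  fixes X :: "nat list" and g :: "nat \<Rightarrow> nat \<Rightarrow> nat" and dX dY :: nat
  assumes dX: "dX = 2 ^ length X" and dY: "dY = 2 ^ length (compl_qubits X)"
  and fw1: "\<And>j. j < 8 \<Longrightarrow> sub_idx X j < dX"
  and fw2: "\<And>j. j < 8 \<Longrightarrow> sub_idx (compl_qubits X) j < dY"
  and fw3: "\<And>j. j < 8 \<Longrightarrow> g (sub_idx X j) (sub_idx (compl_qubits X) j) = j"
  and bw1: "\<And>x y. x < dX \<Longrightarrow> y < dY \<Longrightarrow> g x y < 8"
  and bw2: "\<And>x y. x < dX \<Longrightarrow> y < dY \<Longrightarrow> sub_idx X (g x y) = x"
  and bw3: "\<And>x y. x < dX \<Longrightarrow> y < dY \<Longrightarrow> sub_idx (compl_qubits X) (g x y) = y"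
begin

abbreviation "fX \<equiv> sub_idx X"
abbreviation "fY \<equiv> sub_idx (compl_qubits X)"

lemma reidx: "(\<Sum>j<8. h j) = (\<Sum>x<dX. \<Sum>y<dY. h (g x y))"
proof -
  have "(\<Sum>j<8. h j) = (\<Sum>p\<in>{..<dX} \<times> {..<dY}. h (g (fst p) (snd p)))"
    by (rule sum.reindex_bij_witness[where j = "\<lambda>j. (fX j, fY j)" and i = "\<lambda>p. g (fst p) (snd p)"])
       (auto simp: fw1 fw2 fw3 bw1 bw2 bw3)
  also have "\<dots> = (\<Sum>x<dX. \<Sum>y<dY. h (g x y))"
    by (simp add: sum.cartesian_product split_def)
  finally show ?thesis .
qed

lemma C1: assumes y: "y < dY"
  shows "(\<Sum>j<8. if fY j = y then F j else 0) = (\<Sum>x<dX. F (g x y))"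
proof -
  have "(\<Sum>j<8. if fY j = y then F j else 0) = (\<Sum>x<dX. \<Sum>y1<dY. if fY (g x y1) = y then F (g x y1) else 0)"
    by (rule reidx)
  also have "\<dots> = (\<Sum>x<dX. \<Sum>y1<dY. if y1 = y then F (g x y1) else 0)"
    by (intro sum.cong refl) (auto simp: bw3)
  also have "\<dots> = (\<Sum>x<dX. F (g x y))" using y by simp
  finally show ?thesis .
qed

lemma C2: assumes x: "x < dX" and y: "y < dY"
  shows "(\<Sum>j<8. if fX j = x \<and> fY j = y then F j else 0) = F (g x y)"
proof -
  have "(\<Sum>j<8. if fX j = x \<and> fY j = y then F j else 0) = (\<Sum>x1<dX. \<Sum>y1<dY. if fX (g x1 y1) = x \<and> fY (g x1 y1) = y then F (g x1 y1) else 0)"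
    by (rule reidx)
  also have "\<dots> = (\<Sum>x1<dX. if x1 = x then (\<Sum>y1<dY. if y1 = y then F (g x1 y1) else 0) else 0)"
    by (intro sum.cong refl) (auto simp: bw2 bw3)
  also have "\<dots> = F (g x y)" using x y by simp
  finally show ?thesis .
qed

lemma ptrace_dim: "ptrace X N \<in> carrier_mat dY dY"
  unfolding ptrace_def Let_def dY by simp

lemma embed_dim: "embed_op X E \<in> carrier_mat 8 8"
  unfolding embed_op_def Let_def by simp

lemma ptrace_entry:
  assumes y: "y < dY" and y': "y' < dY"
  shows "ptrace X N $$ (y, y') = (\<Sum>x<dX. N $$ (g x y, g x y'))"
proof -
  have "ptrace X N $$ (y, y') = (\<Sum>j<8. \<Sum>j'<8. if fY j = y \<and> fY j' = y' \<and> fX j = fX j' then N $$ (j, j') else 0)"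
    unfolding ptrace_def Let_def using y y' dY by simp
  also have "\<dots> = (\<Sum>j<8. if fY j = y then (\<Sum>j'<8. if fX j' = fX j \<and> fY j' = y' then N $$ (j, j') else 0) else 0)"
    by (auto intro!: sum.cong)
  also have "\<dots> = (\<Sum>x<dX. (\<Sum>j'<8. if fX j' = fX (g x y) \<and> fY j' = y' then N $$ (g x y, j') else 0))"
    by (rule C1[OF y])
  also have "\<dots> = (\<Sum>x<dX. N $$ (g x y, g x y'))"
    by (intro sum.cong refl) (simp add: C2 y y' bw2)
  finally show ?thesis .
qed

lemma mtrace_ptrace:
  assumes N: "N \<in> carrier_mat 8 8"
  shows "mtrace (ptrace X N) = mtrace N"
proof -
  have "mtrace (ptrace X N) = (\<Sum>y<dY. \<Sum>x<dX. N $$ (g x y, g x y))"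
    unfolding mtrace_def using ptrace_dim[of N] by (intro sum.cong refl) (auto simp: ptrace_entry)
  also have "\<dots> = (\<Sum>j<8. N $$ (j, j))"
    by (subst sum.swap) (simp add: reidx)
  also have "\<dots> = mtrace N" using N by (simp add: mtrace_def)
  finally show ?thesis .
qed

lemma embed_entry:
  assumes "j < 8" "k < 8"
  shows "embed_op X E $$ (j, k) = (if fY j = fY k then E $$ (fX j, fX k) else 0)"
  unfolding embed_op_def Let_def using assms by simp

lemma embed_mult_entry:
  assumes M: "M \<in> carrier_mat 8 8" and x: "x < dX" and y: "y < dY" and j': "j' < 8"
  shows "(embed_op X E * M) $$ (g x y, j') = (\<Sum>x'<dX. E $$ (x, x') * M $$ (g x' y, j'))"
proof -
  have "(embed_op X E * M) $$ (g x y, j') = (\<Sum>k<8. embed_op X E $$ (g x y, k) * M $$ (k, j'))"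
    using M embed_dim[of E] bw1[OF x y] j' by (simp add: scalar_prod_def atLeast0LessThan)
  also have "\<dots> = (\<Sum>k<8. if fY k = y then E $$ (x, fX k) * M $$ (k, j') else 0)"
    by (intro sum.cong refl) (auto simp: embed_entry bw1[OF x y] bw2[OF x y] bw3[OF x y])
  also have "\<dots> = (\<Sum>x'<dX. E $$ (x, fX (g x' y)) * M $$ (g x' y, j'))"
    by (rule C1[OF y])
  also have "\<dots> = (\<Sum>x'<dX. E $$ (x, x') * M $$ (g x' y, j'))"
    by (intro sum.cong refl) (simp add: bw2 y)
  finally show ?thesis .
qed

end

definition pure :: "complex vec \<Rightarrow> complex mat" where
  "pure \<psi> = mat 8 8 (\<lambda>(i, j). \<psi> $ i * cnj (\<psi> $ j))"

lemma swap4: "(\<Sum>a\<in>A. \<Sum>b\<in>B. \<Sum>c\<in>C. \<Sum>d\<in>D. f a b c d) = (\<Sum>c\<in>C. \<Sum>d\<in>D. \<Sum>a\<in>A. \<Sum>b\<in>B. f a b c d)"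
proof -
  have "(\<Sum>a\<in>A. \<Sum>b\<in>B. \<Sum>c\<in>C. \<Sum>d\<in>D. f a b c d) = (\<Sum>a\<in>A. \<Sum>c\<in>C. \<Sum>b\<in>B. \<Sum>d\<in>D. f a b c d)"
    by (rule sum.cong[OF refl], rule sum.swap)
  also have "\<dots> = (\<Sum>c\<in>C. \<Sum>a\<in>A. \<Sum>b\<in>B. \<Sum>d\<in>D. f a b c d)"
    by (rule sum.swap)
  also have "\<dots> = (\<Sum>c\<in>C. \<Sum>a\<in>A. \<Sum>d\<in>D. \<Sum>b\<in>B. f a b c d)"
    by (rule sum.cong[OF refl], rule sum.cong[OF refl], rule sum.swap)
  also have "\<dots> = (\<Sum>c\<in>C. \<Sum>d\<in>D. \<Sum>a\<in>A. \<Sum>b\<in>B. f a b c d)"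
    by (rule sum.cong[OF refl], rule sum.swap)
  finally show ?thesis .
qed

context qsplit begin

lemma post_entry:
  assumes y: "y < dY" and y': "y' < dY"
  shows "ptrace X (embed_op X E * pure \<psi>) $$ (y, y') =
     (\<Sum>x<dX. \<Sum>x'<dX. E $$ (x, x') * (\<psi> $ g x' y * cnj (\<psi> $ g x y')))"
proof -
  have P: "pure \<psi> \<in> carrier_mat 8 8" unfolding pure_def by simp
  show ?thesis
    unfolding ptrace_entry[OF y y']
    by (intro sum.cong refl) (subst embed_mult_entry[OF P], auto simp: bw1 y y' pure_def)
qed

lemma post_quad:
  fixes E :: "complex mat" and \<psi> :: "complex vec" and w :: "complex vec"
  assumes w: "w \<in> carrier_vec dY"
  assumes E: "E \<in> carrier_mat dX dX"
  defines "M \<equiv> ptrace X (embed_op X E * pure \<psi>)"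
  defines "z \<equiv> vec dX (\<lambda>x. \<Sum>y<dY. cnj (w $ y) * \<psi> $ g x y)"
  shows "w \<bullet>c (M *\<^sub>v w) = z \<bullet>c (E *\<^sub>v z)"
proof -
  have Md: "M \<in> carrier_mat dY dY" unfolding M_def by (rule ptrace_dim)
  have "w \<bullet>c (M *\<^sub>v w) = (\<Sum>y<dY. \<Sum>y'<dY. \<Sum>x<dX. \<Sum>x'<dX.
     w $ y * cnj (w $ y') * cnj (E $$ (x, x')) * cnj (\<psi> $ g x' y) * \<psi> $ g x y')"
    using w Md unfolding M_def
    by (simp add: scalar_prod_def atLeast0LessThan post_entry cnj_sum sum_distrib_left sum_distrib_right ac_simps)
  also have "\<dots> = (\<Sum>x<dX. \<Sum>x'<dX. \<Sum>y<dY. \<Sum>y'<dY.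
     w $ y * cnj (w $ y') * cnj (E $$ (x, x')) * cnj (\<psi> $ g x' y) * \<psi> $ g x y')"
    by (rule swap4)
  also have "\<dots> = z \<bullet>c (E *\<^sub>v z)"
    using E unfolding z_def
    by (simp add: scalar_prod_def atLeast0LessThan cnj_sum sum_distrib_left sum_distrib_right ac_simps)
  finally show ?thesis .
qed

end

lemma cscalar_smult_right:
  fixes v u :: "complex vec"
  assumes "v \<in> carrier_vec n" "u \<in> carrier_vec n"
  shows "v \<bullet>c (c \<cdot>\<^sub>v u) = cnj c * (v \<bullet>c u)"
  using assms by (simp add: scalar_prod_def sum_distrib_left conjugate_complex_def algebra_simps)

lemma mtrace_smult: "M \<in> carrier_mat n n \<Longrightarrow> mtrace (c \<cdot>\<^sub>m M) = c * mtrace (M :: complex mat)"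
  unfolding mtrace_def by (auto simp: sum_distrib_left intro!: sum.cong)

context qsplit begin

lemma post_diag:
  assumes E: "psd_mat dX E" and y: "y < dY"
  shows "Im (ptrace X (embed_op X E * pure \<psi>) $$ (y, y)) = 0 \<and> 0 \<le> Re (ptrace X (embed_op X E * pure \<psi>) $$ (y, y))"
proof -
  let ?M = "ptrace X (embed_op X E * pure \<psi>)"
  let ?w = "unit_vec dY y :: complex vec"
  have Md: "?M \<in> carrier_mat dY dY" by (rule ptrace_dim)
  have Ec: "E \<in> carrier_mat dX dX" using E unfolding psd_mat_def by simp
  have w: "?w \<in> carrier_vec dY" by simp
  obtain z where z: "z \<in> carrier_vec dX" and q: "?w \<bullet>c (?M *\<^sub>v ?w) = z \<bullet>c (E *\<^sub>v z)"
    using post_quad[OF w Ec, where \<psi>=\<psi>] vec_carrier by blast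
  have "?w \<bullet>c (?M *\<^sub>v ?w) = cnj (?M $$ (y, y))"
  proof -
    have "?w \<bullet>c (?M *\<^sub>v ?w) = conjugate (?M *\<^sub>v ?w) $ y"
      using Md y by (intro scalar_prod_left_unit) auto
    then show ?thesis using Md y by simp
  qed
  moreover have "Im (z \<bullet>c (E *\<^sub>v z)) = 0 \<and> 0 \<le> Re (z \<bullet>c (E *\<^sub>v z))"
    using E z unfolding psd_mat_def by blast
  ultimately show ?thesis using q by simp
qed

lemma contrib_nonneg:
  assumes E: "psd_mat dX E"
  shows "0 \<le> meas_prob X (pure \<psi>) E * vn_entropy (post_state X (pure \<psi>) E)"
proof -
  let ?M = "ptrace X (embed_op X E * pure \<psi>)"
  let ?p = "meas_prob X (pure \<psi>) E"
  have Md: "?M \<in> carrier_mat dY dY" by (rule ptrace_dim)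
  have Ec: "E \<in> carrier_mat dX dX" using E unfolding psd_mat_def by simp
  have N: "embed_op X E * pure \<psi> \<in> carrier_mat 8 8"
    using embed_dim[of E] by (simp add: pure_def)
  have trM: "mtrace ?M = mtrace (embed_op X E * pure \<psi>)" by (rule mtrace_ptrace[OF N])
  have imtr: "Im (mtrace ?M) = 0" and retr: "0 \<le> Re (mtrace ?M)"
    using Md post_diag[OF E] by (auto simp: mtrace_def Im_sum Re_sum intro!: sum_nonneg)
  have p: "?p = Re (mtrace ?M)" unfolding meas_prob_def trM ..
  have mp: "mtrace ?M = complex_of_real ?p" using imtr p by (simp add: complex_eq_iff)
  show ?thesis
  proof (cases "?p = 0")
    case True then show ?thesis by simp
  next
    case False
    then have ppos: "?p > 0" using retr p by simp
    let ?P = "post_state X (pure \<psi>) E"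
    have Pd: "?P = complex_of_real (1 / ?p) \<cdot>\<^sub>m ?M" unfolding post_state_def ..
    have Pc: "?P \<in> carrier_mat dY dY" using Md Pd by simp
    have trP: "mtrace ?P = 1" using Pd mp False by (simp add: mtrace_smult[OF Md])
    have psd: "\<forall>v\<in>carrier_vec dY. Im (v \<bullet>c (?P *\<^sub>v v)) = 0 \<and> 0 \<le> Re (v \<bullet>c (?P *\<^sub>v v))"
    proof
      fix v :: "complex vec" assume v: "v \<in> carrier_vec dY"
      obtain z where z: "z \<in> carrier_vec dX" and q: "v \<bullet>c (?M *\<^sub>v v) = z \<bullet>c (E *\<^sub>v z)"
        using post_quad[OF v Ec, where \<psi>=\<psi>] vec_carrier by blast
      have zz: "Im (z \<bullet>c (E *\<^sub>v z)) = 0 \<and> 0 \<le> Re (z \<bullet>c (E *\<^sub>v z))"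
        using E z unfolding psd_mat_def by blast
      have "v \<bullet>c (?P *\<^sub>v v) = complex_of_real (1 / ?p) * (v \<bullet>c (?M *\<^sub>v v))"
        unfolding Pd using Md v by (simp add: smult_mat_vec cscalar_smult_right[of _ dY])
      then show "Im (v \<bullet>c (?P *\<^sub>v v)) = 0 \<and> 0 \<le> Re (v \<bullet>c (?P *\<^sub>v v))"
        using q zz ppos by simp
    qed
    have "0 \<le> vn_entropy ?P" by (rule vn_entropy_nonneg[OF Pc psd trP])
    then show ?thesis using ppos by simp
  qed
qed

end

definition proj :: "nat \<Rightarrow> nat \<Rightarrow> complex mat" where
  "proj n x = mat n n (\<lambda>(i, k). if i = x \<and> k = x then 1 else 0)"

lemma proj_psd:
  assumes x: "x < n"
  shows "psd_mat n (proj n x)"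
proof -
  have c: "proj n x \<in> carrier_mat n n" unfolding proj_def by simp
  have adj: "mat_adjoint (proj n x) = proj n x"
    by (rule eq_matI) (auto simp: mat_adjoint_def proj_def mat_of_rows_index)
  have q: "v \<bullet>c (proj n x *\<^sub>v v) = v $ x * cnj (v $ x)" if v: "v \<in> carrier_vec n" for v :: "complex vec"
  proof -
    have pv: "proj n x *\<^sub>v v = vec n (\<lambda>i. if i = x then v $ x else 0)"
    proof (rule eq_vecI)
      fix i assume i: "i < dim_vec (vec n (\<lambda>i. if i = x then v $ x else 0))"
      have "(proj n x *\<^sub>v v) $ i = (\<Sum>k\<in>{0..<n}. (if i = x \<and> k = x then 1 else 0) * v $ k)"
        using i v unfolding proj_def by (simp add: scalar_prod_def)
      also have "\<dots> = (\<Sum>k\<in>{0..<n}. if i = x then (if k = x then v $ k else 0) else 0)"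
        by (intro sum.cong) auto
      also have "\<dots> = (if i = x then v $ x else 0)"
        using x by auto
      finally show "(proj n x *\<^sub>v v) $ i = vec n (\<lambda>i. if i = x then v $ x else 0) $ i" using i by simp
    qed (simp add: proj_def)
    have "v \<bullet>c vec n (\<lambda>i. if i = x then v $ x else 0) = (\<Sum>i\<in>{0..<n}. v $ i * cnj (if i = x then v $ x else 0))"
      using v by (simp add: scalar_prod_def)
    also have "\<dots> = (\<Sum>i\<in>{0..<n}. if i = x then v $ i * cnj (v $ x) else 0)"
      by (intro sum.cong) auto
    also have "\<dots> = v $ x * cnj (v $ x)" using x by simp
    finally show ?thesis unfolding pv .
  qed
  have "\<forall>v\<in>carrier_vec n. Im (v \<bullet>c (proj n x *\<^sub>v v)) = 0 \<and> 0 \<le> Re (v \<bullet>c (proj n x *\<^sub>v v))"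
    using q by (auto simp: algebra_simps)
  then show ?thesis unfolding psd_mat_def using c adj by simp
qed

lemma proj_povm: "povm n (map (proj n) [0..<n])"
  unfolding povm_def
proof (intro conjI allI impI ballI)
  fix E assume "E \<in> set (map (proj n) [0..<n])"
  then show "psd_mat n E" using proj_psd by auto
next
  fix i j assume i: "i < n" and j: "j < n"
  have "(\<Sum>a<length (map (proj n) [0..<n]). map (proj n) [0..<n] ! a $$ (i, j))
        = (\<Sum>a<n. if i = a \<and> j = a then 1 else 0)"
    using i j by (intro sum.cong refl) (auto simp: proj_def)
  also have "\<dots> = (if i = j then 1 else 0)" using i j by (auto simp: sum.If_cases)
  finally show "(\<Sum>a<length (map (proj n) [0..<n]). map (proj n) [0..<n] ! a $$ (i, j)) = (if i = j then 1 else 0)" .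
qed

lemma delta2:
  assumes "(x::nat) < n"
  shows "(\<Sum>x1<n. \<Sum>x2<n. if x1 = x \<and> x2 = x then f x1 x2 else 0) = f x x"
proof -
  have "(\<Sum>x2<n. if x1 = x \<and> x2 = x then f x1 x2 else 0) = (if x1 = x then f x1 x else 0)" for x1
    using assms by (cases "x1 = x") simp_all
  then show ?thesis using assms by simp
qed

context qsplit begin

lemma trace_post:
  assumes E: "psd_mat dX E"
  shows "mtrace (ptrace X (embed_op X E * pure \<psi>)) = complex_of_real (meas_prob X (pure \<psi>) E)"
proof -
  let ?M = "ptrace X (embed_op X E * pure \<psi>)"
  have Md: "?M \<in> carrier_mat dY dY" by (rule ptrace_dim)
  have N: "embed_op X E * pure \<psi> \<in> carrier_mat 8 8"
    using embed_dim[of E] by (simp add: pure_def)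
  have trM: "mtrace ?M = mtrace (embed_op X E * pure \<psi>)" by (rule mtrace_ptrace[OF N])
  have imtr: "Im (mtrace ?M) = 0"
    using Md post_diag[OF E] by (auto simp: mtrace_def Im_sum intro!: sum.neutral)
  then show ?thesis unfolding meas_prob_def trM[symmetric] by (simp add: complex_eq_iff)
qed

lemma contrib_proj:
  assumes x: "x < dX"
  shows "meas_prob X (pure \<psi>) (proj dX x) * vn_entropy (post_state X (pure \<psi>) (proj dX x)) = 0"
proof (cases "meas_prob X (pure \<psi>) (proj dX x) = 0")
  case True then show ?thesis by simp
next
  case False
  let ?E = "proj dX x"
  let ?p = "meas_prob X (pure \<psi>) ?E"
  let ?M = "ptrace X (embed_op X ?E * pure \<psi>)"
  let ?P = "post_state X (pure \<psi>) ?E"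
  let ?c = "complex_of_real (1 / ?p)"
  have Md: "?M \<in> carrier_mat dY dY" by (rule ptrace_dim)
  have Pd: "?P = ?c \<cdot>\<^sub>m ?M" unfolding post_state_def ..
  have Pc: "?P \<in> carrier_mat dY dY" using Md Pd by simp
  have Ment: "?M $$ (y, y') = \<psi> $ g x y * cnj (\<psi> $ g x y')" if "y < dY" "y' < dY" for y y'
  proof -
    have "?M $$ (y, y') = (\<Sum>x1<dX. \<Sum>x2<dX. ?E $$ (x1, x2) * (\<psi> $ g x2 y * cnj (\<psi> $ g x1 y')))"
      by (rule post_entry[OF that])
    also have "\<dots> = (\<Sum>x1<dX. \<Sum>x2<dX. if x1 = x \<and> x2 = x then \<psi> $ g x2 y * cnj (\<psi> $ g x1 y') else 0)"
      by (intro sum.cong refl) (auto simp: proj_def)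
    also have "\<dots> = \<psi> $ g x y * cnj (\<psi> $ g x y')" using x by (rule delta2)
    finally show ?thesis .
  qed
  have tr: "mtrace ?M = complex_of_real ?p" by (rule trace_post[OF proj_psd[OF x]])
  have tr2: "(\<Sum>y<dY. \<psi> $ g x y * cnj (\<psi> $ g x y)) = complex_of_real ?p"
    using tr Md Ment unfolding mtrace_def by (simp add: atLeast0LessThan)
  have cp: "?c * complex_of_real ?p = 1" using False by (simp flip: of_real_mult)
  have "?P * ?P = ?P"
  proof (rule eq_matI)
    fix i j assume i: "i < dim_row ?P" and j: "j < dim_col ?P"
    then have i': "i < dY" and j': "j < dY" using Pc by auto
    have "(?P * ?P) $$ (i, j) = (\<Sum>k<dY. (?c * (\<psi> $ g x i * cnj (\<psi> $ g x k))) * (?c * (\<psi> $ g x k * cnj (\<psi> $ g x j))))"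
      using Pc i' j' Pd Md by (simp add: scalar_prod_def atLeast0LessThan Ment)
    also have "\<dots> = (\<Sum>k<dY. ?c * ?c * (\<psi> $ g x i * cnj (\<psi> $ g x j)) * (\<psi> $ g x k * cnj (\<psi> $ g x k)))"
      by (intro sum.cong refl) (simp add: ac_simps)
    also have "\<dots> = ?c * ?c * (\<psi> $ g x i * cnj (\<psi> $ g x j)) * (\<Sum>k<dY. \<psi> $ g x k * cnj (\<psi> $ g x k))"
      by (rule sum_distrib_left[symmetric])
    also have "\<dots> = ?c * (\<psi> $ g x i * cnj (\<psi> $ g x j)) * (?c * complex_of_real ?p)"
      unfolding tr2 by (simp add: ac_simps)
    also have "\<dots> = ?c * (\<psi> $ g x i * cnj (\<psi> $ g x j))" using cp by simp
    also have "\<dots> = ?P $$ (i, j)" using Pd Md i' j' Ment by simp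
    finally show "(?P * ?P) $$ (i, j) = ?P $$ (i, j)" .
  qed auto
  then have "vn_entropy ?P = 0" by (rule vn_entropy_idem[OF Pc])
  then show ?thesis by simp
qed

end

context qsplit begin

lemma inf_zero:
  "(INF Es \<in> {Es. povm (2 ^ length X) Es}.
        \<Sum>a<length Es. meas_prob X (pure \<psi>) (Es ! a) * vn_entropy (post_state X (pure \<psi>) (Es ! a))) = 0"
proof -
  let ?f = "\<lambda>Es. \<Sum>a<length Es. meas_prob X (pure \<psi>) (Es ! a) * vn_entropy (post_state X (pure \<psi>) (Es ! a))"
  let ?W = "map (proj dX) [0..<dX]"
  have W: "?W \<in> {Es. povm dX Es}" using proj_povm by simp
  have "?f ?W = (\<Sum>a<dX. meas_prob X (pure \<psi>) (proj dX a) * vn_entropy (post_state X (pure \<psi>) (proj dX a)))"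
    by (intro sum.cong) auto
  also have "\<dots> = 0" by (intro sum.neutral ballI) (simp add: contrib_proj)
  finally have fW: "?f ?W = 0" .
  have "Inf (?f ` {Es. povm dX Es}) = 0"
  proof (rule cInf_eq_minimum)
    show "0 \<in> ?f ` {Es. povm dX Es}" by (rule image_eqI[where f = ?f and x = ?W], rule fW[symmetric], rule W)
  next
    fix r assume "r \<in> ?f ` {Es. povm dX Es}"
    then obtain Es where Es: "povm dX Es" and r: "r = ?f Es" by auto
    show "0 \<le> r" unfolding r
    proof (rule sum_nonneg)
      fix a assume "a \<in> {..<length Es}"
      then have "Es ! a \<in> set Es" by simp
      then have "psd_mat dX (Es ! a)" using Es unfolding povm_def by blast
      then show "0 \<le> meas_prob X (pure \<psi>) (Es ! a) * vn_entropy (post_state X (pure \<psi>) (Es ! a))"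
        by (rule contrib_nonneg)
    qed
  qed
  then show ?thesis unfolding dX .
qed

end

lemma less8: "(j::nat) < 8 \<longleftrightarrow> j \<in> {0,1,2,3,4,5,6,7}" by auto
lemma less4: "(j::nat) < 4 \<longleftrightarrow> j \<in> {0,1,2,3}" by auto
lemma less2: "(j::nat) < 2 \<longleftrightarrow> j \<in> {0,1}" by auto

lemma compl_simps:
  "compl_qubits [0] = [1,2]" "compl_qubits [1] = [0,2]" "compl_qubits [2] = [0,1]"
  "compl_qubits [0,1] = [2]" "compl_qubits [0,2] = [1]" "compl_qubits [1,2] = [0]"
  by (simp_all add: compl_qubits_def)

lemma sub_idx1: "sub_idx [a] j = qbit j a"
  by (simp add: sub_idx_def)
lemma sub_idx2: "sub_idx [a, b] j = 2 * qbit j a + qbit j b"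
  by (simp add: sub_idx_def lessThan_nat_numeral)

lemmas sidx = compl_qubits_def sub_idx1 sub_idx2 qbit_def

interpretation q0: qsplit "[0]" "\<lambda>x y. 4 * x + y" 2 4
  by unfold_locales (auto simp: sidx less8 less4 less2)

interpretation q1: qsplit "[1]" "\<lambda>x y. 4 * (y div 2) + 2 * x + y mod 2" 2 4
  by unfold_locales (auto simp: sidx less8 less4 less2)
interpretation q2: qsplit "[2]" "\<lambda>x y. 2 * y + x" 2 4
  by unfold_locales (auto simp: sidx less8 less4 less2)
interpretation q01: qsplit "[0,1]" "\<lambda>x y. 2 * x + y" 4 2
  by unfold_locales (auto simp: sidx less8 less4 less2)
interpretation q02: qsplit "[0,2]" "\<lambda>x y. 4 * (x div 2) + 2 * y + x mod 2" 4 2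
  by unfold_locales (auto simp: sidx less8 less4 less2)
interpretation q12: qsplit "[1,2]" "\<lambda>x y. 4 * y + x" 4 2
  by unfold_locales (auto simp: sidx less8 less4 less2)

definition w8 :: "nat \<Rightarrow> complex" where "w8 j = (if j = 7 then 5 else 1)"

lemma sq2: "complex_of_real (sqrt 2) * complex_of_real (sqrt 2) = 2"
  by (simp flip: of_real_mult)

lemma rho2_entry: "i < 8 \<Longrightarrow> j < 8 \<Longrightarrow> rho2 $$ (i, j) = w8 i * w8 j / 32"
  unfolding rho2_def psi2_def w8_def by (simp add: field_simps sq2)

definition R1 :: "complex mat" where
  "R1 = mat 2 2 (\<lambda>(i, j). if i = 0 \<and> j = 0 then 1/8 else if i = 1 \<and> j = 1 then 7/8 else 1/4)"
definition R2 :: "complex mat" where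
  "R2 = mat 4 4 (\<lambda>(i, j). if i = 3 \<and> j = 3 then 13/16 else if i = 3 \<or> j = 3 then 3/16 else 1/16)"

lemma red12: "ptrace [1,2] rho2 = R1"
proof (rule eq_matI)
  show "dim_row (ptrace [1,2] rho2) = dim_row R1" "dim_col (ptrace [1,2] rho2) = dim_col R1"
    using q12.ptrace_dim[of rho2] by (auto simp: R1_def)
  fix i j assume "i < dim_row R1" "j < dim_col R1"
  then have ij: "i < 2" "j < 2" by (auto simp: R1_def)
  have e: "ptrace [1,2] rho2 $$ (i, j) = (\<Sum>x<4. rho2 $$ ((\<lambda>x y. 4 * y + x) x i, (\<lambda>x y. 4 * y + x) x j))"
    by (rule q12.ptrace_entry[OF ij])
  show "ptrace [1,2] rho2 $$ (i, j) = R1 $$ (i, j)"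
    unfolding e using ij by (auto simp: less2 less4 rho2_entry w8_def R1_def lessThan_nat_numeral)
qed

lemma red02: "ptrace [0,2] rho2 = R1"
proof (rule eq_matI)
  show "dim_row (ptrace [0,2] rho2) = dim_row R1" "dim_col (ptrace [0,2] rho2) = dim_col R1"
    using q02.ptrace_dim[of rho2] by (auto simp: R1_def)
  fix i j assume "i < dim_row R1" "j < dim_col R1"
  then have ij: "i < 2" "j < 2" by (auto simp: R1_def)
  have e: "ptrace [0,2] rho2 $$ (i, j) = (\<Sum>x<4. rho2 $$ ((\<lambda>x y. 4 * (x div 2) + 2 * y + x mod 2) x i, (\<lambda>x y. 4 * (x div 2) + 2 * y + x mod 2) x j))"
    by (rule q02.ptrace_entry[OF ij])
  show "ptrace [0,2] rho2 $$ (i, j) = R1 $$ (i, j)"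
    unfolding e using ij by (auto simp: less2 less4 rho2_entry w8_def R1_def lessThan_nat_numeral)
qed

lemma red01: "ptrace [0,1] rho2 = R1"
proof (rule eq_matI)
  show "dim_row (ptrace [0,1] rho2) = dim_row R1" "dim_col (ptrace [0,1] rho2) = dim_col R1"
    using q01.ptrace_dim[of rho2] by (auto simp: R1_def)
  fix i j assume "i < dim_row R1" "j < dim_col R1"
  then have ij: "i < 2" "j < 2" by (auto simp: R1_def)
  have e: "ptrace [0,1] rho2 $$ (i, j) = (\<Sum>x<4. rho2 $$ ((\<lambda>x y. 2 * x + y) x i, (\<lambda>x y. 2 * x + y) x j))"
    by (rule q01.ptrace_entry[OF ij])
  show "ptrace [0,1] rho2 $$ (i, j) = R1 $$ (i, j)"
    unfolding e using ij by (auto simp: less2 less4 rho2_entry w8_def R1_def lessThan_nat_numeral)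
qed

lemma red2: "ptrace [2] rho2 = R2"
proof (rule eq_matI)
  show "dim_row (ptrace [2] rho2) = dim_row R2" "dim_col (ptrace [2] rho2) = dim_col R2"
    using q2.ptrace_dim[of rho2] by (auto simp: R2_def)
  fix i j assume "i < dim_row R2" "j < dim_col R2"
  then have ij: "i < 4" "j < 4" by (auto simp: R2_def)
  have e: "ptrace [2] rho2 $$ (i, j) = (\<Sum>x<2. rho2 $$ ((\<lambda>x y. 2 * y + x) x i, (\<lambda>x y. 2 * y + x) x j))"
    by (rule q2.ptrace_entry[OF ij])
  show "ptrace [2] rho2 $$ (i, j) = R2 $$ (i, j)"
    unfolding e using ij by (auto simp: less2 less4 rho2_entry w8_def R2_def lessThan_nat_numeral)
qed

lemma red1: "ptrace [1] rho2 = R2"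
proof (rule eq_matI)
  show "dim_row (ptrace [1] rho2) = dim_row R2" "dim_col (ptrace [1] rho2) = dim_col R2"
    using q1.ptrace_dim[of rho2] by (auto simp: R2_def)
  fix i j assume "i < dim_row R2" "j < dim_col R2"
  then have ij: "i < 4" "j < 4" by (auto simp: R2_def)
  have e: "ptrace [1] rho2 $$ (i, j) = (\<Sum>x<2. rho2 $$ ((\<lambda>x y. 4 * (y div 2) + 2 * x + y mod 2) x i, (\<lambda>x y. 4 * (y div 2) + 2 * x + y mod 2) x j))"
    by (rule q1.ptrace_entry[OF ij])
  show "ptrace [1] rho2 $$ (i, j) = R2 $$ (i, j)"
    unfolding e using ij by (auto simp: less2 less4 rho2_entry w8_def R2_def lessThan_nat_numeral)
qed

lemma red0: "ptrace [0] rho2 = R2"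
proof (rule eq_matI)
  show "dim_row (ptrace [0] rho2) = dim_row R2" "dim_col (ptrace [0] rho2) = dim_col R2"
    using q0.ptrace_dim[of rho2] by (auto simp: R2_def)
  fix i j assume "i < dim_row R2" "j < dim_col R2"
  then have ij: "i < 4" "j < 4" by (auto simp: R2_def)
  have e: "ptrace [0] rho2 $$ (i, j) = (\<Sum>x<2. rho2 $$ ((\<lambda>x y. 4 * x + y) x i, (\<lambda>x y. 4 * x + y) x j))"
    by (rule q0.ptrace_entry[OF ij])
  show "ptrace [0] rho2 $$ (i, j) = R2 $$ (i, j)"
    unfolding e using ij by (auto simp: less2 less4 rho2_entry w8_def R2_def lessThan_nat_numeral)
qed

lemma R1_props: "R1 \<in> carrier_mat 2 2" "R1 * R1 + (3/64) \<cdot>\<^sub>m 1\<^sub>m 2 = R1" "mtrace R1 = 1"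
proof -
  show "R1 \<in> carrier_mat 2 2" by (simp add: R1_def)
  show "R1 * R1 + (3/64) \<cdot>\<^sub>m 1\<^sub>m 2 = R1"
    by (rule eq_matI) (auto simp: R1_def less2 scalar_prod_def atLeast0LessThan lessThan_nat_numeral)
  show "mtrace R1 = 1"
    by (simp add: R1_def mtrace_def lessThan_nat_numeral)
qed

lemma R2_props: "R2 \<in> carrier_mat 4 4" "R2 * (R2 * R2) + (3/64) \<cdot>\<^sub>m R2 = R2 * R2" "mtrace R2 = 1"
proof -
  show "R2 \<in> carrier_mat 4 4" by (simp add: R2_def)
  show "R2 * (R2 * R2) + (3/64) \<cdot>\<^sub>m R2 = R2 * R2"
    by (rule eq_matI) (auto simp: R2_def less4 scalar_prod_def atLeast0LessThan lessThan_nat_numeral)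
  show "mtrace R2 = 1"
    by (simp add: R2_def mtrace_def lessThan_nat_numeral)
qed

definition vval :: real where
  "vval = - (1/8) * (4 + sqrt 13) * log 2 ((1/8) * (4 + sqrt 13))
               - (1/8) * (4 - sqrt 13) * log 2 ((1/8) * (4 - sqrt 13))"

lemma s13: "sqrt 13 * sqrt 13 = (13::real)" "0 \<le> sqrt (13::real)" by simp_all

lemma s13_bounds: "3.6 < sqrt (13::real)" "sqrt (13::real) < 3.7"
proof -
  show "3.6 < sqrt (13::real)" by (rule real_less_rsqrt) (simp add: power2_eq_square)
  show "sqrt (13::real) < 3.7"
  proof (rule ccontr)
    assume "\<not> sqrt (13::real) < 3.7"
    then have "3.7 * 3.7 \<le> sqrt (13::real) * sqrt 13" by (intro mult_mono) auto
    then show False using s13 by simp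
  qed
qed

abbreviation "aa \<equiv> (1/8) * (4 + sqrt (13::real))"
abbreviation "bb \<equiv> (1/8) * (4 - sqrt (13::real))"

lemma aa_pos: "aa > 0" and bb_pos: "bb > 0" using s13_bounds by auto

lemma quad_roots:
  fixes e :: complex
  assumes "e * e + 3/64 = e"
  shows "e = complex_of_real aa \<or> e = complex_of_real bb"
proof -
  have r: "aa + bb = 1" by (simp add: field_simps)
  have sum: "complex_of_real aa + complex_of_real bb = 1"
    using r by (metis of_real_add of_real_1)
  have prod: "complex_of_real aa * complex_of_real bb = 3/64"
  proof -
    have "aa * bb = 3/64" using s13 by (simp add: algebra_simps)
    then show ?thesis by (metis of_real_mult of_real_divide of_real_numeral)
  qed
  have "(e - complex_of_real aa) * (e - complex_of_real bb) = e * e - (complex_of_real aa + complex_of_real bb) * e + complex_of_real aa * complex_of_real bb"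
    by (simp add: algebra_simps)
  also have "\<dots> = 0" unfolding sum prod using assms by (simp add: algebra_simps)
  finally show ?thesis by simp
qed

lemma xlogx_aa: "xlogx aa = aa * log 2 aa" using aa_pos by (simp add: xlogx_def)
lemma xlogx_bb: "xlogx bb = bb * log 2 bb" using bb_pos by (simp add: xlogx_def)

lemma vval_alt: "vval = - (xlogx aa + xlogx bb)"
  unfolding vval_def xlogx_aa xlogx_bb by (simp add: algebra_simps)

lemma xlogx0[simp]: "xlogx 0 = 0" by (simp add: xlogx_def)

lemma two_case:
  fixes r1 r2 :: real
  assumes "r1 = aa \<or> r1 = bb" "r2 = aa \<or> r2 = bb" "r1 + r2 = 1"
  shows "xlogx r1 + xlogx r2 = xlogx aa + xlogx bb"
  using assms s13_bounds by (elim disjE; hypsubst; simp)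

lemma four_case:
  fixes r1 r2 r3 r4 :: real
  assumes "r1 = 0 \<or> r1 = aa \<or> r1 = bb" "r2 = 0 \<or> r2 = aa \<or> r2 = bb"
    "r3 = 0 \<or> r3 = aa \<or> r3 = bb" "r4 = 0 \<or> r4 = aa \<or> r4 = bb" "r1 + r2 + r3 + r4 = 1"
  shows "xlogx r1 + xlogx r2 + xlogx r3 + xlogx r4 = xlogx aa + xlogx bb"
  using assms s13_bounds by (elim disjE; hypsubst; simp)

lemma entropy2:
  fixes A :: "complex mat"
  assumes A: "A \<in> carrier_mat 2 2" and eq: "A * A + (3/64) \<cdot>\<^sub>m 1\<^sub>m 2 = A" and tr: "mtrace A = 1"
  shows "vn_entropy A = vval"
proof -
  obtain es where pr: "proots (char_poly A) = mset es" and len: "length es = 2"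
    and sl: "sum_list es = mtrace A" and ev: "\<forall>e\<in>set es. eigenvalue A e"
    using eig_list[OF A] by blast
  obtain e1 e2 where es: "es = [e1, e2]" using len
    by (auto simp: length_Suc_conv numeral_eq_Suc)
  have r: "Re e = aa \<or> Re e = bb" if "e \<in> set es" for e
  proof -
    have "e = complex_of_real aa \<or> e = complex_of_real bb"
      using quad_roots eig_quad[OF A eq] ev that by blast
    then show ?thesis by (metis Re_complex_of_real)
  qed
  have "Re (sum_list es) = 1" using sl tr by simp
  then have s: "Re e1 + Re e2 = 1" unfolding es by simp
  have "vn_entropy A = - (xlogx (Re e1) + xlogx (Re e2))"
    unfolding vn_entropy_list[OF pr] es by simp
  also have "\<dots> = vval"
    unfolding vval_alt using two_case[OF r[of e1] r[of e2] s] es by simp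
  finally show ?thesis .
qed

lemma entropy4:
  fixes A :: "complex mat"
  assumes A: "A \<in> carrier_mat 4 4" and eq: "A * (A * A) + (3/64) \<cdot>\<^sub>m A = A * A" and tr: "mtrace A = 1"
  shows "vn_entropy A = vval"
proof -
  obtain es where pr: "proots (char_poly A) = mset es" and len: "length es = 4"
    and sl: "sum_list es = mtrace A" and ev: "\<forall>e\<in>set es. eigenvalue A e"
    using eig_list[OF A] by blast
  obtain e1 e2 e3 e4 where es: "es = [e1, e2, e3, e4]" using len
    by (auto simp: length_Suc_conv numeral_eq_Suc)
  have r: "Re e = 0 \<or> Re e = aa \<or> Re e = bb" if "e \<in> set es" for e
  proof -
    have c: "e * e * e + 3/64 * e = e * e" using eig_cubic[OF A eq] ev that by blast
    have "e * (e * e + 3/64 - e) = 0" using c by (simp add: algebra_simps)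
    then have "e = 0 \<or> e * e + 3/64 - e = 0" by simp
    then have "e = 0 \<or> e * e + 3/64 = e" using eq_iff_diff_eq_0 by blast
    then have "e = 0 \<or> e = complex_of_real aa \<or> e = complex_of_real bb" using quad_roots by blast
    then show ?thesis by (metis Re_complex_of_real zero_complex.sel(1))
  qed
  have "Re (sum_list es) = 1" using sl tr by simp
  then have s: "Re e1 + Re e2 + Re e3 + Re e4 = 1" unfolding es by simp
  have "vn_entropy A = - (xlogx (Re e1) + xlogx (Re e2) + xlogx (Re e3) + xlogx (Re e4))"
    unfolding vn_entropy_list[OF pr] es by (simp add: algebra_simps)
  also have "\<dots> = vval"
    unfolding vval_alt using four_case[OF r[of e1] r[of e2] r[of e3] r[of e4] s] es by simp
  finally show ?thesis .
qed

lemma rho2_pure: "rho2 = pure psi2"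
  unfolding rho2_def pure_def ..

lemma vn_rho2: "vn_entropy rho2 = 0"
proof (rule vn_entropy_idem)
  show "rho2 \<in> carrier_mat 8 8" by (simp add: rho2_def)
  show "rho2 * rho2 = rho2"
  proof (rule eq_matI)
    fix i k assume "i < dim_row rho2" "k < dim_col rho2"
    then have ik: "i < 8" "k < 8" by (auto simp: rho2_def)
    have "(rho2 * rho2) $$ (i, k) = (\<Sum>j<8. rho2 $$ (i, j) * rho2 $$ (j, k))"
      using ik by (simp add: rho2_def scalar_prod_def atLeast0LessThan)
    also have "\<dots> = (\<Sum>j<8. w8 i * w8 k / 1024 * (w8 j * w8 j))"
      using ik by (intro sum.cong refl) (simp add: rho2_entry field_simps)
    also have "\<dots> = w8 i * w8 k / 1024 * (\<Sum>j<8. w8 j * w8 j)"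
      by (rule sum_distrib_left[symmetric])
    also have "(\<Sum>j<8. w8 j * w8 j) = 32"
      by (simp add: w8_def lessThan_nat_numeral)
    also have "w8 i * w8 k / 1024 * 32 = rho2 $$ (i, k)"
      using ik by (simp add: rho2_entry)
    finally show "(rho2 * rho2) $$ (i, k) = rho2 $$ (i, k)" .
  qed (auto simp: rho2_def)
qed

lemma compls:
  "compl_qubits [0] = [1,2]" "compl_qubits [1] = [0,2]" "compl_qubits [2] = [0,1]"
  "compl_qubits [0,1] = [2]" "compl_qubits [0,2] = [1]" "compl_qubits [1,2] = [0]"
  by (simp_all add: compl_qubits_def)

lemma disc0: "discord [0] rho2 = vval"
proof -
  have "discord [0] rho2 = 0 + vn_entropy (ptrace (compl_qubits [0]) rho2) - vn_entropy rho2"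
    unfolding discord_def q0.inf_zero[of psi2, folded rho2_pure] ..
  also have "\<dots> = vval"
    unfolding compls red12 vn_rho2 entropy2[OF R1_props] by simp
  finally show ?thesis .
qed

lemma disc1: "discord [1] rho2 = vval"
proof -
  have "discord [1] rho2 = 0 + vn_entropy (ptrace (compl_qubits [1]) rho2) - vn_entropy rho2"
    unfolding discord_def q1.inf_zero[of psi2, folded rho2_pure] ..
  also have "\<dots> = vval"
    unfolding compls red02 vn_rho2 entropy2[OF R1_props] by simp
  finally show ?thesis .
qed

lemma disc2: "discord [2] rho2 = vval"
proof -
  have "discord [2] rho2 = 0 + vn_entropy (ptrace (compl_qubits [2]) rho2) - vn_entropy rho2"
    unfolding discord_def q2.inf_zero[of psi2, folded rho2_pure] ..
  also have "\<dots> = vval"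
    unfolding compls red01 vn_rho2 entropy2[OF R1_props] by simp
  finally show ?thesis .
qed

lemma disc01: "discord [0,1] rho2 = vval"
proof -
  have "discord [0,1] rho2 = 0 + vn_entropy (ptrace (compl_qubits [0,1]) rho2) - vn_entropy rho2"
    unfolding discord_def q01.inf_zero[of psi2, folded rho2_pure] ..
  also have "\<dots> = vval"
    unfolding compls red2 vn_rho2 entropy4[OF R2_props] by simp
  finally show ?thesis .
qed

lemma disc02: "discord [0,2] rho2 = vval"
proof -
  have "discord [0,2] rho2 = 0 + vn_entropy (ptrace (compl_qubits [0,2]) rho2) - vn_entropy rho2"
    unfolding discord_def q02.inf_zero[of psi2, folded rho2_pure] ..
  also have "\<dots> = vval"
    unfolding compls red1 vn_rho2 entropy4[OF R2_props] by simp
  finally show ?thesis .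
qed

lemma disc12: "discord [1,2] rho2 = vval"
proof -
  have "discord [1,2] rho2 = 0 + vn_entropy (ptrace (compl_qubits [1,2]) rho2) - vn_entropy rho2"
    unfolding discord_def q12.inf_zero[of psi2, folded rho2_pure] ..
  also have "\<dots> = vval"
    unfolding compls red0 vn_rho2 entropy4[OF R2_props] by simp
  finally show ?thesis .
qed

theorem lemma2:
  defines "v \<equiv> - (1/8) * (4 + sqrt 13) * log 2 ((1/8) * (4 + sqrt 13))
               - (1/8) * (4 - sqrt 13) * log 2 ((1/8) * (4 - sqrt 13))"
  shows "discord [0] rho2 = discord [1] rho2 \<and>
         discord [1] rho2 = discord [2] rho2 \<and>
         discord [2] rho2 = discord [0, 1] rho2 \<and>
         discord [0, 1] rho2 = discord [0, 2] rho2 \<and>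
         discord [0, 2] rho2 = discord [1, 2] rho2 \<and>
         discord [1, 2] rho2 = v"
  unfolding disc0 disc1 disc2 disc01 disc02 disc12 v_def vval_def by simp

end
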